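(* Let $\omega\ge2$ and let $\Gamma$ be a finite simple graph that is $\omega$-clique regular and a non-boring $\mathrm{srg}(n,k,\lambda,\mu)$. Then $\Gamma$ and $C_\omega(\Gamma)$ are strongly regular graphs with the same parameters if and only if $k=\omega(\omega-1)$.
   Context: A graph is $\omega$-clique regular if it has a nonempty edge set and every edge lies in exactly one clique of order $\omega$. $C_\omega(\Gamma)$ has as vertices the cliques of order $\omega$ of $\Gamma$, two distinct ones adjacent iff they have nonempty intersection. $\mathrm{srg}(n,k,\lambda,\mu)$: $n$ vertices, $k$-regular, adjacent vertices have $\lambda$ common neighbours, distinct non-adjacent vertices have $\mu$ common neighbours. An srg is boring if it has at most two distinct adjacency eigenvalues, non-boring otherwise. *)

theory Defs
  imports Complex_Main
begin

definition simple_graph :: "'v set \<Rightarrow> ('v \<Rightarrow> 'v \<Rightarrow> bool) \<Rightarrow> bool" where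
  "simple_graph V E \<longleftrightarrow> finite V \<and> (\<forall>x y. E x y \<longrightarrow> x \<in> V \<and> y \<in> V)
     \<and> (\<forall>x y. E x y \<longrightarrow> E y x) \<and> (\<forall>x. \<not> E x x)"

definition clique :: "'v set \<Rightarrow> ('v \<Rightarrow> 'v \<Rightarrow> bool) \<Rightarrow> 'v set \<Rightarrow> bool" where
  "clique V E S \<longleftrightarrow> S \<subseteq> V \<and> (\<forall>x\<in>S. \<forall>y\<in>S. x \<noteq> y \<longrightarrow> E x y)"

definition cliques_of_order :: "'v set \<Rightarrow> ('v \<Rightarrow> 'v \<Rightarrow> bool) \<Rightarrow> nat \<Rightarrow> 'v set set" where
  "cliques_of_order V E w = {S. clique V E S \<and> finite S \<and> card S = w}"

definition clique_regular :: "'v set \<Rightarrow> ('v \<Rightarrow> 'v \<Rightarrow> bool) \<Rightarrow> nat \<Rightarrow> bool" where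
  "clique_regular V E w \<longleftrightarrow> (\<exists>x y. E x y) \<and>
     (\<forall>x y. E x y \<longrightarrow> (\<exists>!S. S \<in> cliques_of_order V E w \<and> x \<in> S \<and> y \<in> S))"

definition clique_graph_vertices :: "'v set \<Rightarrow> ('v \<Rightarrow> 'v \<Rightarrow> bool) \<Rightarrow> nat \<Rightarrow> 'v set set" where
  "clique_graph_vertices V E w = cliques_of_order V E w"

definition clique_graph_adj :: "'v set \<Rightarrow> ('v \<Rightarrow> 'v \<Rightarrow> bool) \<Rightarrow> nat \<Rightarrow> 'v set \<Rightarrow> 'v set \<Rightarrow> bool" where
  "clique_graph_adj V E w S T \<longleftrightarrow> S \<in> cliques_of_order V E w \<and> T \<in> cliques_of_order V E w
     \<and> S \<noteq> T \<and> S \<inter> T \<noteq> {}"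

definition common_nbrs :: "'v set \<Rightarrow> ('v \<Rightarrow> 'v \<Rightarrow> bool) \<Rightarrow> 'v \<Rightarrow> 'v \<Rightarrow> nat" where
  "common_nbrs V E x y = card {z\<in>V. E x z \<and> E y z}"

definition srg :: "'v set \<Rightarrow> ('v \<Rightarrow> 'v \<Rightarrow> bool) \<Rightarrow> nat \<Rightarrow> nat \<Rightarrow> nat \<Rightarrow> nat \<Rightarrow> bool" where
  "srg V E n k l m \<longleftrightarrow> simple_graph V E \<and> card V = n
     \<and> (\<forall>x\<in>V. card {y\<in>V. E x y} = k)
     \<and> (\<forall>x\<in>V. \<forall>y\<in>V. E x y \<longrightarrow> common_nbrs V E x y = l)
     \<and> (\<forall>x\<in>V. \<forall>y\<in>V. x \<noteq> y \<and> \<not> E x y \<longrightarrow> common_nbrs V E x y = m)"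

definition adj_eigenvalue :: "'v set \<Rightarrow> ('v \<Rightarrow> 'v \<Rightarrow> bool) \<Rightarrow> complex \<Rightarrow> bool" where
  "adj_eigenvalue V E \<theta> \<longleftrightarrow> (\<exists>f. (\<forall>x. x \<notin> V \<longrightarrow> f x = 0) \<and> (\<exists>x\<in>V. f x \<noteq> 0) \<and>
     (\<forall>x\<in>V. (\<Sum>y\<in>{y\<in>V. E x y}. f y) = \<theta> * f x))"

definition boring :: "'v set \<Rightarrow> ('v \<Rightarrow> 'v \<Rightarrow> bool) \<Rightarrow> bool" where
  "boring V E \<longleftrightarrow> card {\<theta>. adj_eigenvalue V E \<theta>} \<le> 2"

end

theory Submission
  imports Defs
begin


lemma sum_delta_r: "finite A \<Longrightarrow> (\<Sum>x\<in>A. f x * (if x = z then 1 else 0)) = (if z \<in> A then f z else (0::real))"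
  by (simp add: sum.delta' if_distrib cong: if_cong)

lemma sum_delta_l: "finite A \<Longrightarrow> (\<Sum>x\<in>A. f x * (if z = x then 1 else 0)) = (if z \<in> A then f z else (0::real))"
  by (simp add: sum.delta if_distrib cong: if_cong)

lemma alg:
  fixes V :: "'v set" and L :: "'s set" and N :: "'v \<Rightarrow> 's \<Rightarrow> real"
    and e :: "'v \<Rightarrow> 'v \<Rightarrow> real" and a :: "'s \<Rightarrow> 's \<Rightarrow> real" and w k d c0 mu :: real
  assumes finV: "finite V" and finL: "finite L"
  and hN: "\<And>x y. x\<in>V \<Longrightarrow> y\<in>V \<Longrightarrow> (\<Sum>S\<in>L. N x S * N y S) = e x y + w * (if x = y then 1 else 0)"
  and hB: "\<And>S T. S\<in>L \<Longrightarrow> T\<in>L \<Longrightarrow> (\<Sum>x\<in>V. N x S * N x T) = a S T + w * (if S = T then 1 else 0)"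
  and hE: "\<And>x y. x\<in>V \<Longrightarrow> y\<in>V \<Longrightarrow> (\<Sum>z\<in>V. e x z * e z y) = d * e x y + c0 * (if x = y then 1 else 0) + mu"
  and hEr: "\<And>x. x\<in>V \<Longrightarrow> (\<Sum>y\<in>V. e x y) = k"
  and hesym: "\<And>x y. e x y = e y x"
  and hA: "\<And>S. S\<in>L \<Longrightarrow> (\<Sum>T\<in>L. a S T) = k"
  and hasym: "\<And>S T. a S T = a T S"
  and haa: "\<And>S T. a S T * a S T = a S T"
  and hadiag: "\<And>S. a S S = 0"
  and hcol: "\<And>S. S\<in>L \<Longrightarrow> (\<Sum>x\<in>V. N x S) = w"
  and hcard: "card L = card V"
  and hk: "k + w = w * w"
  and hc0: "c0 = k - mu"
  shows "\<forall>S\<in>L. \<forall>T\<in>L. (\<Sum>U\<in>L. a S U * a U T) = d * a S T + c0 * (if S = T then 1 else 0) + mu"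
proof -
  define dl :: "'s \<Rightarrow> 's \<Rightarrow> real" where "dl S T = (if S = T then 1 else 0)" for S T
  define b where "b S T = a S T + w * dl S T" for S T
  define X where "X S T = (\<Sum>U\<in>L. a S U * a U T) - d * a S T - c0 * dl S T - mu" for S T
  have bsym: "b S T = b T S" for S T by (simp add: b_def dl_def hasym)
  have F: "(\<Sum>x\<in>V. N x S * e x z) = (\<Sum>U\<in>L. a S U * N z U)" if "S \<in> L" "z \<in> V" for S z
  proof -
    have "(\<Sum>x\<in>V. N x S * e x z) = (\<Sum>x\<in>V. N x S * ((\<Sum>U\<in>L. N x U * N z U) - w * (if x = z then 1 else 0)))"
      by (rule sum.cong) (simp_all add: hN that)
    also have "\<dots> = (\<Sum>x\<in>V. (\<Sum>U\<in>L. N z U * (N x S * N x U))) - w * (\<Sum>x\<in>V. N x S * (if x = z then 1 else 0))"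
      by (simp add: right_diff_distrib sum_subtractf sum_distrib_left sum_distrib_right mult_ac)
    also have "\<dots> = (\<Sum>U\<in>L. N z U * (\<Sum>x\<in>V. N x S * N x U)) - w * N z S"
      using finV that by (simp add: sum_delta_r sum_distrib_left sum.swap[of _ V])
    also have "\<dots> = (\<Sum>U\<in>L. N z U * (a S U + w * (if S = U then 1 else 0))) - w * N z S"
      by (intro arg_cong2[where f="(-)"] sum.cong refl) (simp add: hB that)
    also have "\<dots> = (\<Sum>U\<in>L. a S U * N z U) + (\<Sum>U\<in>L. N z U * (w * (if S = U then 1 else 0))) - w * N z S"
      by (simp add: distrib_left sum.distrib mult_ac)
    also have "(\<Sum>U\<in>L. N z U * (w * (if S = U then 1 else 0))) = w * N z S"
      using finL that by (simp add: if_distrib sum.delta cong: if_cong)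
    finally show ?thesis by simp
  qed
  have step1: "(\<Sum>U\<in>L. b S U * X U T) = 0" if ST: "S \<in> L" "T \<in> L" for S T
  proof -
    have Q0: "(\<Sum>z\<in>V. e x z * e z y) - d * e x y - c0 * (if x = y then 1 else 0) - mu = 0"
      if "x \<in> V" "y \<in> V" for x y using hE[OF that] by simp
    have Y0: "(\<Sum>x\<in>V. \<Sum>y\<in>V. N x S * N y T * ((\<Sum>z\<in>V. e x z * e z y) - d * e x y - c0 * (if x = y then 1 else 0) - mu)) = 0"
      using Q0 by simp
    have T1: "(\<Sum>x\<in>V. \<Sum>y\<in>V. N x S * N y T * (\<Sum>z\<in>V. e x z * e z y)) = (\<Sum>U\<in>L. \<Sum>W\<in>L. a S U * a T W * b U W)"
    proof -
      have "(\<Sum>x\<in>V. \<Sum>y\<in>V. N x S * N y T * (\<Sum>z\<in>V. e x z * e z y)) = (\<Sum>x\<in>V. \<Sum>y\<in>V. \<Sum>z\<in>V. (N x S * e x z) * (N y T * e z y))"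
        by (simp add: sum_distrib_left mult_ac)
      also have "\<dots> = (\<Sum>x\<in>V. \<Sum>z\<in>V. \<Sum>y\<in>V. (N x S * e x z) * (N y T * e z y))"
        by (rule sum.cong[OF refl], rule sum.swap)
      also have "\<dots> = (\<Sum>z\<in>V. \<Sum>x\<in>V. \<Sum>y\<in>V. (N x S * e x z) * (N y T * e z y))"
        by (rule sum.swap)
      also have "\<dots> = (\<Sum>z\<in>V. (\<Sum>x\<in>V. N x S * e x z) * (\<Sum>y\<in>V. N y T * e z y))"
        by (simp add: sum_product)
      also have "\<dots> = (\<Sum>z\<in>V. (\<Sum>U\<in>L. a S U * N z U) * (\<Sum>W\<in>L. a T W * N z W))"
      proof (rule sum.cong[OF refl])
        fix z assume z: "z \<in> V"
        have "(\<Sum>y\<in>V. N y T * e z y) = (\<Sum>y\<in>V. N y T * e y z)"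
          by (rule sum.cong[OF refl]) (metis hesym)
        then show "(\<Sum>x\<in>V. N x S * e x z) * (\<Sum>y\<in>V. N y T * e z y) = (\<Sum>U\<in>L. a S U * N z U) * (\<Sum>W\<in>L. a T W * N z W)"
          using F[OF ST(1) z] F[OF ST(2) z] by simp
      qed
      also have "\<dots> = (\<Sum>z\<in>V. \<Sum>U\<in>L. \<Sum>W\<in>L. a S U * a T W * (N z U * N z W))"
        by (simp add: sum_product mult_ac)
      also have "\<dots> = (\<Sum>U\<in>L. \<Sum>z\<in>V. \<Sum>W\<in>L. a S U * a T W * (N z U * N z W))"
        by (rule sum.swap)
      also have "\<dots> = (\<Sum>U\<in>L. \<Sum>W\<in>L. \<Sum>z\<in>V. a S U * a T W * (N z U * N z W))"
        by (rule sum.cong[OF refl], rule sum.swap)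
      also have "\<dots> = (\<Sum>U\<in>L. \<Sum>W\<in>L. a S U * a T W * b U W)"
        by (intro sum.cong refl) (simp add: sum_distrib_left[symmetric] hB b_def dl_def)
      finally show ?thesis .
    qed
    have T2: "(\<Sum>x\<in>V. \<Sum>y\<in>V. N x S * N y T * e x y) = (\<Sum>U\<in>L. a S U * b U T)"
    proof -
      have "(\<Sum>x\<in>V. \<Sum>y\<in>V. N x S * N y T * e x y) = (\<Sum>y\<in>V. \<Sum>x\<in>V. N y T * (N x S * e x y))"
        by (subst sum.swap) (simp add: mult_ac)
      also have "\<dots> = (\<Sum>y\<in>V. N y T * (\<Sum>U\<in>L. a S U * N y U))"
        by (intro sum.cong refl) (simp add: sum_distrib_left[symmetric] F ST)
      also have "\<dots> = (\<Sum>y\<in>V. \<Sum>U\<in>L. a S U * (N y U * N y T))"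
        by (simp add: sum_distrib_left mult_ac)
      also have "\<dots> = (\<Sum>U\<in>L. \<Sum>y\<in>V. a S U * (N y U * N y T))"
        by (rule sum.swap)
      also have "\<dots> = (\<Sum>U\<in>L. a S U * b U T)"
        by (intro sum.cong refl) (simp add: sum_distrib_left[symmetric] hB b_def dl_def ST)
      finally show ?thesis .
    qed
    have T3: "(\<Sum>x\<in>V. \<Sum>y\<in>V. N x S * N y T * (if x = y then 1 else 0)) = b S T"
    proof -
      have "(\<Sum>x\<in>V. \<Sum>y\<in>V. N x S * N y T * (if x = y then 1 else 0)) = (\<Sum>x\<in>V. N x S * N x T)"
        using finV by (intro sum.cong refl) (simp add: if_distrib sum.delta cong: if_cong)
      then show ?thesis using hB[OF ST] by (simp add: b_def dl_def)
    qed
    have T4: "(\<Sum>x\<in>V. \<Sum>y\<in>V. N x S * N y T) = w * w"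
      by (simp add: sum_product[symmetric] hcol ST)
    have Yexp: "(\<Sum>x\<in>V. \<Sum>y\<in>V. N x S * N y T * ((\<Sum>z\<in>V. e x z * e z y) - d * e x y - c0 * (if x = y then 1 else 0) - mu))
      = (\<Sum>x\<in>V. \<Sum>y\<in>V. N x S * N y T * (\<Sum>z\<in>V. e x z * e z y)) - d * (\<Sum>x\<in>V. \<Sum>y\<in>V. N x S * N y T * e x y)
        - c0 * (\<Sum>x\<in>V. \<Sum>y\<in>V. N x S * N y T * (if x = y then 1 else 0)) - mu * (\<Sum>x\<in>V. \<Sum>y\<in>V. N x S * N y T)"
      by (simp add: right_diff_distrib sum_subtractf sum_distrib_left mult_ac)
    define A2 where "A2 S T = (\<Sum>U\<in>L. a S U * a U T)" for S T
    define A3 where "A3 = (\<Sum>U\<in>L. \<Sum>W\<in>L. a S U * a U W * a W T)"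
    have dsum1: "(\<Sum>U\<in>L. f U * (w * dl U T)) = w * f T" for f
    proof -
      have "(\<Sum>U\<in>L. f U * (w * dl U T)) = (\<Sum>U\<in>L. if U = T then w * f U else 0)"
        by (rule sum.cong) (auto simp: dl_def)
      then show ?thesis using finL ST by simp
    qed
    have dsum2: "(\<Sum>U\<in>L. w * dl S U * f U) = w * f S" for f
    proof -
      have "(\<Sum>U\<in>L. w * dl S U * f U) = (\<Sum>U\<in>L. if S = U then w * f U else 0)"
        by (rule sum.cong) (auto simp: dl_def)
      then show ?thesis using finL ST by simp
    qed
    have i: "(\<Sum>U\<in>L. a S U * b U T) = A2 S T + w * a S T"
      using dsum1[of "a S"] by (simp add: b_def distrib_left sum.distrib A2_def)
    have ii: "(\<Sum>U\<in>L. b S U * a U T) = A2 S T + w * a S T"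
      using dsum2[of "\<lambda>U. a U T"] by (simp add: b_def distrib_right sum.distrib A2_def)
    have iii: "(\<Sum>U\<in>L. \<Sum>W\<in>L. a S U * a T W * b U W) = A3 + w * A2 S T"
    proof -
      have "(\<Sum>U\<in>L. \<Sum>W\<in>L. a S U * a T W * b U W) = (\<Sum>U\<in>L. (\<Sum>W\<in>L. a S U * a U W * a W T) + w * (a S U * a U T))"
      proof (intro sum.cong refl)
        fix U assume U: "U \<in> L"
        have "(\<Sum>W\<in>L. a S U * a T W * (w * dl U W)) = (\<Sum>W\<in>L. if U = W then w * (a S U * a U T) else 0)"
          by (rule sum.cong) (auto simp: dl_def hasym)
        then have "(\<Sum>W\<in>L. a S U * a T W * (w * dl U W)) = w * (a S U * a U T)"
          using finL U by simp
        then show "(\<Sum>W\<in>L. a S U * a T W * b U W) = (\<Sum>W\<in>L. a S U * a U W * a W T) + w * (a S U * a U T)"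
          by (simp add: b_def distrib_left sum.distrib hasym[of T] mult_ac)
      qed
      then show ?thesis by (simp add: sum.distrib A3_def A2_def sum_distrib_left)
    qed
    have iv: "(\<Sum>U\<in>L. b S U * A2 U T) = A3 + w * A2 S T"
    proof -
      have "(\<Sum>U\<in>L. b S U * A2 U T) = (\<Sum>U\<in>L. a S U * A2 U T) + (\<Sum>U\<in>L. w * dl S U * A2 U T)"
        by (simp add: b_def distrib_right sum.distrib)
      moreover have "(\<Sum>U\<in>L. a S U * A2 U T) = A3"
        by (simp add: A2_def A3_def sum_distrib_left mult_ac)
      ultimately show ?thesis using dsum2[of "\<lambda>U. A2 U T"] by simp
    qed
    have v: "(\<Sum>U\<in>L. b S U) = w * w"
      using dsum2[of "\<lambda>U. 1"] hA[OF ST(1)] hk by (simp add: b_def sum.distrib)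
    have vi: "(\<Sum>U\<in>L. b S U * X U T) = (\<Sum>U\<in>L. b S U * A2 U T) - d * (\<Sum>U\<in>L. b S U * a U T)
        - c0 * (\<Sum>U\<in>L. b S U * dl U T) - mu * (\<Sum>U\<in>L. b S U)"
      by (simp add: X_def A2_def right_diff_distrib sum_subtractf sum_distrib_left mult_ac)
    have vii: "(\<Sum>U\<in>L. b S U * dl U T) = b S T"
    proof -
      have "(\<Sum>U\<in>L. b S U * dl U T) = (\<Sum>U\<in>L. if U = T then b S U else 0)"
        by (rule sum.cong) (auto simp: dl_def)
      then show ?thesis using finL ST by simp
    qed
    show ?thesis
      using Y0 Yexp T1 T2 T3 T4 i ii iii iv v vi vii by simp
  qed
  have Lne: "V \<noteq> {}" if "L \<noteq> {}"
    using that hcard finL finV by auto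
  have pk: "k * k = d * k + c0 + mu * card V" if Lne0: "L \<noteq> {}"
  proof -
    obtain x where x: "x \<in> V" using Lne[OF Lne0] by auto
    have "(\<Sum>y\<in>V. \<Sum>z\<in>V. e x z * e z y) = (\<Sum>z\<in>V. e x z * (\<Sum>y\<in>V. e z y))"
      by (subst sum.swap) (simp add: sum_distrib_left)
    also have "\<dots> = (\<Sum>z\<in>V. e x z * k)"
      by (intro sum.cong refl) (simp add: hEr)
    also have "\<dots> = k * k" using hEr[OF x] by (simp add: sum_distrib_right[symmetric])
    finally have 1: "(\<Sum>y\<in>V. \<Sum>z\<in>V. e x z * e z y) = k * k" .
    have "(\<Sum>y\<in>V. \<Sum>z\<in>V. e x z * e z y) = (\<Sum>y\<in>V. d * e x y + c0 * (if x = y then 1 else 0) + mu)"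
      by (intro sum.cong refl) (simp add: hE x)
    also have "\<dots> = d * (\<Sum>y\<in>V. e x y) + (\<Sum>y\<in>V. if x = y then c0 else 0) + mu * card V"
      by (simp add: sum.distrib sum_distrib_left if_distrib[of "\<lambda>t. c0 * t"] cong: if_cong)
    also have "\<dots> = d * k + c0 + mu * card V"
      using finV x hEr[OF x] by simp
    finally show ?thesis using 1 by simp
  qed
  have rows: "(\<Sum>T\<in>L. X S T) = 0" if S: "S \<in> L" for S
  proof -
    have "(\<Sum>T\<in>L. \<Sum>U\<in>L. a S U * a U T) = (\<Sum>U\<in>L. a S U * (\<Sum>T\<in>L. a U T))"
      by (subst sum.swap) (simp add: sum_distrib_left)
    also have "\<dots> = (\<Sum>U\<in>L. a S U * k)"
      by (intro sum.cong refl) (simp add: hA)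
    also have "\<dots> = k * k" using hA[OF S] by (simp add: sum_distrib_right[symmetric])
    finally have 1: "(\<Sum>T\<in>L. \<Sum>U\<in>L. a S U * a U T) = k * k" .
    have 2: "(\<Sum>T\<in>L. dl S T) = 1" using finL S by (simp add: dl_def)
    have "(\<Sum>T\<in>L. X S T) = (\<Sum>T\<in>L. \<Sum>U\<in>L. a S U * a U T) - d * (\<Sum>T\<in>L. a S T) - c0 * (\<Sum>T\<in>L. dl S T) - mu * card L"
      by (simp add: X_def sum_subtractf sum_distrib_left)
    moreover have "L \<noteq> {}" using S by auto
    ultimately show ?thesis using 1 2 hA[OF S] pk hcard by simp
  qed
  have trace: "(\<Sum>S\<in>L. X S S) = 0"
  proof -
    have 1: "(\<Sum>S\<in>L. \<Sum>U\<in>L. a S U * a U S) = (\<Sum>S\<in>L. k)"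
    proof (intro sum.cong refl)
      fix S assume S: "S \<in> L"
      have "(\<Sum>U\<in>L. a S U * a U S) = (\<Sum>U\<in>L. a S U)"
        by (intro sum.cong refl) (metis hasym haa)
      then show "(\<Sum>U\<in>L. a S U * a U S) = k" using hA[OF S] by simp
    qed
    have "(\<Sum>S\<in>L. X S S) = (\<Sum>S\<in>L. \<Sum>U\<in>L. a S U * a U S) - d * (\<Sum>S\<in>L. a S S) - c0 * (\<Sum>S\<in>L. dl S S) - mu * card L"
      by (simp add: X_def sum_subtractf sum_distrib_left)
    then show ?thesis using 1 by (simp add: hadiag dl_def hc0 algebra_simps)
  qed
  define cc where "cc = w * w + d * w - c0"
  define q where "q U T = a U T - (w + d) * dl U T" for U T
  have Xalt: "X S T = (\<Sum>U\<in>L. b S U * q U T) + cc * dl S T - mu" if ST: "S \<in> L" "T \<in> L" for S T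
  proof -
    have e1: "(\<Sum>U\<in>L. b S U * a U T) = (\<Sum>U\<in>L. a S U * a U T) + w * a S T"
    proof -
      have "(\<Sum>U\<in>L. w * dl S U * a U T) = (\<Sum>U\<in>L. if S = U then w * a U T else 0)"
        by (rule sum.cong) (auto simp: dl_def)
      then have "(\<Sum>U\<in>L. w * dl S U * a U T) = w * a S T" using finL ST by simp
      then show ?thesis by (simp add: b_def distrib_right sum.distrib)
    qed
    have e2: "(\<Sum>U\<in>L. b S U * dl U T) = b S T"
    proof -
      have "(\<Sum>U\<in>L. b S U * dl U T) = (\<Sum>U\<in>L. if U = T then b S U else 0)"
        by (rule sum.cong) (auto simp: dl_def)
      then show ?thesis using finL ST by simp
    qed
    have "(\<Sum>U\<in>L. b S U * q U T) = (\<Sum>U\<in>L. b S U * a U T) - (w + d) * (\<Sum>U\<in>L. b S U * dl U T)"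
      by (simp add: q_def right_diff_distrib sum_subtractf sum_distrib_left mult_ac)
    then show ?thesis using e1 e2 by (simp add: X_def b_def cc_def algebra_simps)
  qed
  have sq0: "(\<Sum>S\<in>L. \<Sum>T\<in>L. X S T * X S T) = 0"
  proof -
    have "(\<Sum>S\<in>L. \<Sum>T\<in>L. X S T * X S T) = (\<Sum>S\<in>L. \<Sum>T\<in>L. X S T * ((\<Sum>U\<in>L. b S U * q U T) + cc * dl S T - mu))"
      by (intro sum.cong refl) (simp add: Xalt)
    also have "\<dots> = (\<Sum>S\<in>L. \<Sum>T\<in>L. \<Sum>U\<in>L. X S T * b S U * q U T) + cc * (\<Sum>S\<in>L. \<Sum>T\<in>L. X S T * dl S T) - mu * (\<Sum>S\<in>L. \<Sum>T\<in>L. X S T)"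
      by (simp add: distrib_left right_diff_distrib sum_subtractf sum.distrib sum_distrib_left mult_ac)
    also have "(\<Sum>S\<in>L. \<Sum>T\<in>L. X S T) = 0" using rows by simp
    also have "(\<Sum>S\<in>L. \<Sum>T\<in>L. X S T * dl S T) = (\<Sum>S\<in>L. X S S)"
    proof (intro sum.cong refl)
      fix S assume S: "S \<in> L"
      have "(\<Sum>T\<in>L. X S T * dl S T) = (\<Sum>T\<in>L. if S = T then X S T else 0)"
        by (rule sum.cong) (auto simp: dl_def)
      then show "(\<Sum>T\<in>L. X S T * dl S T) = X S S" using finL S by simp
    qed
    also have "(\<Sum>S\<in>L. \<Sum>T\<in>L. \<Sum>U\<in>L. X S T * b S U * q U T) = (\<Sum>T\<in>L. \<Sum>U\<in>L. q U T * (\<Sum>S\<in>L. b U S * X S T))"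
    proof -
      have "(\<Sum>S\<in>L. \<Sum>T\<in>L. \<Sum>U\<in>L. X S T * b S U * q U T) = (\<Sum>T\<in>L. \<Sum>S\<in>L. \<Sum>U\<in>L. X S T * b S U * q U T)"
        by (rule sum.swap)
      also have "\<dots> = (\<Sum>T\<in>L. \<Sum>U\<in>L. \<Sum>S\<in>L. X S T * b S U * q U T)"
        by (rule sum.cong[OF refl], rule sum.swap)
      also have "\<dots> = (\<Sum>T\<in>L. \<Sum>U\<in>L. q U T * (\<Sum>S\<in>L. b U S * X S T))"
        unfolding sum_distrib_left by (intro sum.cong refl) (metis bsym mult.commute mult.left_commute)
      finally show ?thesis .
    qed
    also have "\<dots> = 0" by (simp add: step1)
    finally show ?thesis using trace by simp
  qed
  have X0: "X S T = 0" if "S \<in> L" "T \<in> L" for S T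
  proof -
    have "\<forall>S\<in>L. (\<Sum>T\<in>L. X S T * X S T) = 0"
      using sq0 finL by (subst (asm) sum_nonneg_eq_0_iff) (auto intro!: sum_nonneg)
    then have "\<forall>T\<in>L. X S T * X S T = 0"
      using that finL by (subst (asm) sum_nonneg_eq_0_iff) auto
    then show ?thesis using that by simp
  qed
  show ?thesis
  proof (intro ballI)
    fix S T assume "S \<in> L" "T \<in> L"
    from X0[OF this] show "(\<Sum>U\<in>L. a S U * a U T) = d * a S T + c0 * (if S = T then 1 else 0) + mu"
      unfolding X_def dl_def by linarith
  qed
qed


lemma card_sum_real: "finite A \<Longrightarrow> real (card {x\<in>A. P x}) = (\<Sum>x\<in>A. if P x then 1 else 0)"
  by (simp add: sum.inter_filter[symmetric])

lemma card_sum_nat: "finite A \<Longrightarrow> card {x\<in>A. P x} = (\<Sum>x\<in>A. if P x then 1 else (0::nat))"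
  by (simp add: sum.inter_filter[symmetric])

locale cr =
  fixes V :: "'v set" and E :: "'v \<Rightarrow> 'v \<Rightarrow> bool" and w :: nat
  assumes w2: "w \<ge> 2" and sg: "simple_graph V E" and creg: "clique_regular V E w"
begin

abbreviation "L \<equiv> cliques_of_order V E w"

lemma finV: "finite V" using sg by (simp add: simple_graph_def)
lemma Ein: "E x y \<Longrightarrow> x \<in> V \<and> y \<in> V" using sg by (simp add: simple_graph_def)
lemma Esym: "E x y \<Longrightarrow> E y x" using sg by (simp add: simple_graph_def)
lemma Eirr: "\<not> E x x" using sg by (simp add: simple_graph_def)

lemma Lmem: "S \<in> L \<longleftrightarrow> S \<subseteq> V \<and> finite S \<and> card S = w \<and> (\<forall>x\<in>S. \<forall>y\<in>S. x \<noteq> y \<longrightarrow> E x y)"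
  by (auto simp: cliques_of_order_def clique_def)

lemma Lsub: "S \<in> L \<Longrightarrow> S \<subseteq> V" by (simp add: Lmem)
lemma Lfin: "S \<in> L \<Longrightarrow> finite S" by (simp add: Lmem)
lemma Lcard: "S \<in> L \<Longrightarrow> card S = w" by (simp add: Lmem)
lemma Lclq: "S \<in> L \<Longrightarrow> x \<in> S \<Longrightarrow> y \<in> S \<Longrightarrow> x \<noteq> y \<Longrightarrow> E x y" by (simp add: Lmem)

lemma finL: "finite L"
proof -
  have "L \<subseteq> Pow V" by (auto simp: Lmem)
  then show ?thesis using finV finite_subset by blast
qed

lemma uniq: "E x y \<Longrightarrow> \<exists>!S. S \<in> L \<and> x \<in> S \<and> y \<in> S"
  using creg by (simp add: clique_regular_def)

lemma inter_le1: assumes "S \<in> L" "T \<in> L" "S \<noteq> T" shows "card (S \<inter> T) \<le> 1"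
proof (rule ccontr)
  assume "\<not> card (S \<inter> T) \<le> 1"
  then have "1 < card (S \<inter> T)" by simp
  moreover have fin: "finite (S \<inter> T)" using assms Lsub Lfin Lcard Lclq by auto
  ultimately have "\<not> (\<forall>a\<in>S \<inter> T. \<forall>b\<in>S \<inter> T. a = b)"
    using card_le_Suc0_iff_eq[OF fin] by simp
  then obtain x y where xy: "x \<in> S \<inter> T" "y \<in> S \<inter> T" "x \<noteq> y" by blast
  then have "E x y" using assms Lsub Lfin Lcard Lclq by auto
  from uniq[OF this] xy assms show False by auto
qed

lemma r_count: assumes x: "x \<in> V" shows "card {S\<in>L. x \<in> S} * (w - 1) = card {y\<in>V. E x y}"
proof -
  let ?Lx = "{S\<in>L. x \<in> S}"
  have fin: "finite ?Lx" using finL by simp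
  have eq: "{y\<in>V. E x y} = (\<Union>S\<in>?Lx. S - {x})"
  proof
    show "{y\<in>V. E x y} \<subseteq> (\<Union>S\<in>?Lx. S - {x})"
    proof
      fix y assume "y \<in> {y\<in>V. E x y}"
      then have "E x y" by simp
      then obtain S where "S \<in> L" "x \<in> S" "y \<in> S" using uniq by blast
      moreover have "y \<noteq> x" using \<open>E x y\<close> Eirr by auto
      ultimately show "y \<in> (\<Union>S\<in>?Lx. S - {x})" by blast
    qed
    show "(\<Union>S\<in>?Lx. S - {x}) \<subseteq> {y\<in>V. E x y}"
    proof
      fix y assume "y \<in> (\<Union>S\<in>?Lx. S - {x})"
      then obtain S where S: "S \<in> L" "x \<in> S" "y \<in> S" "y \<noteq> x" by blast
      have "y \<in> V" using Lsub[OF S(1)] S(3) by blast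
      moreover have "E x y" using Lclq[OF S(1) S(2) S(3)] S(4) by simp
      ultimately show "y \<in> {y\<in>V. E x y}" by simp
    qed
  qed
  have disj: "\<forall>S\<in>?Lx. \<forall>T\<in>?Lx. S \<noteq> T \<longrightarrow> (S - {x}) \<inter> (T - {x}) = {}"
  proof (intro ballI impI)
    fix S T assume S: "S \<in> ?Lx" and T: "T \<in> ?Lx" and ST: "S \<noteq> T"
    show "(S - {x}) \<inter> (T - {x}) = {}"
    proof (rule ccontr)
      assume "(S - {x}) \<inter> (T - {x}) \<noteq> {}"
      then obtain y where "y \<in> S" "y \<in> T" "y \<noteq> x" by blast
      then have "{x, y} \<subseteq> S \<inter> T" using S T by blast
      moreover have "finite (S \<inter> T)" using Lfin S by simp
      ultimately have "card {x, y} \<le> card (S \<inter> T)"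
        by (intro card_mono)
      moreover have "card (S \<inter> T) \<le> 1" using inter_le1[of S T] S T ST by simp
      ultimately show False using \<open>y \<noteq> x\<close> by simp
    qed
  qed
  have "card {y\<in>V. E x y} = (\<Sum>S\<in>?Lx. card (S - {x}))"
    unfolding eq
  proof (rule card_UN_disjoint[OF fin])
    show "\<forall>S\<in>?Lx. finite (S - {x})" using Lfin by simp
  qed (rule disj)
  also have "\<dots> = (\<Sum>S\<in>?Lx. w - 1)"
    by (intro sum.cong refl) (simp add: Lcard Lfin)
  finally show ?thesis by simp
qed

lemma pair_count: assumes "x \<in> V" "y \<in> V" "x \<noteq> y"
  shows "card {S\<in>L. x \<in> S \<and> y \<in> S} = (if E x y then 1 else 0)"
proof (cases "E x y")
  case True
  then obtain S where "S \<in> L \<and> x \<in> S \<and> y \<in> S" "\<forall>T. T \<in> L \<and> x \<in> T \<and> y \<in> T \<longrightarrow> T = S"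
    using uniq by metis
  then have e: "{S\<in>L. x \<in> S \<and> y \<in> S} = {S}" by blast
  show ?thesis using True by (simp only: e card_1_singleton_iff) simp
next
  case False
  have "\<not> (S \<in> L \<and> x \<in> S \<and> y \<in> S)" for S
  proof
    assume h: "S \<in> L \<and> x \<in> S \<and> y \<in> S"
    then have "\<forall>x\<in>S. \<forall>y\<in>S. x \<noteq> y \<longrightarrow> E x y" using Lsub Lfin Lcard Lclq by blast
    then have "E x y" using h assms(3) by blast
    with False show False by simp
  qed
  then have e: "{S\<in>L. x \<in> S \<and> y \<in> S} = {}" by blast
  show ?thesis using False by (simp only: e card.empty) simp
qed

lemma double_count: "card L * w = (\<Sum>x\<in>V. card {S\<in>L. x \<in> S})"
proof -
  have "card L * w = (\<Sum>S\<in>L. card S)" by (simp add: Lmem)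
  also have "\<dots> = (\<Sum>S\<in>L. \<Sum>x\<in>V. if x \<in> S then 1 else 0)"
  proof (intro sum.cong refl)
    fix S assume "S \<in> L"
    then have "S = {x\<in>V. x \<in> S}" using Lsub Lfin Lcard Lclq by auto
    then show "card S = (\<Sum>x\<in>V. if x \<in> S then 1 else 0)"
      using card_sum_nat[OF finV, of "\<lambda>x. x \<in> S"] by simp
  qed
  also have "\<dots> = (\<Sum>x\<in>V. \<Sum>S\<in>L. if x \<in> S then 1 else 0)" by (rule sum.swap)
  also have "\<dots> = (\<Sum>x\<in>V. card {S\<in>L. x \<in> S})"
    using card_sum_nat[OF finL] by simp
  finally show ?thesis .
qed

lemma inter_card: assumes "S \<in> L" "T \<in> L"
  shows "card (S \<inter> T) = (if clique_graph_adj V E w S T then 1 else 0) + (if S = T then w else 0)"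
proof (cases "S = T")
  case True then show ?thesis using assms by (simp add: clique_graph_adj_def Lmem)
next
  case False
  have "card (S \<inter> T) \<le> 1" using inter_le1 assms False by simp
  moreover have "finite (S \<inter> T)" using assms Lsub Lfin Lcard Lclq by auto
  ultimately have "card (S \<inter> T) = (if S \<inter> T = {} then 0 else 1)"
    using card_gt_0_iff[of "S \<inter> T"] by (cases "S \<inter> T = {}") auto
  then show ?thesis using False assms by (auto simp: clique_graph_adj_def)
qed

end
lemma adj_sym: "clique_graph_adj V E w S T = clique_graph_adj V E w T S"
  by (auto simp: clique_graph_adj_def)

theorem corollary4:
  fixes V :: "'v set" and E :: "'v \<Rightarrow> 'v \<Rightarrow> bool" and w n k l m :: nat
  assumes "w \<ge> 2"
    and "simple_graph V E"
    and "clique_regular V E w"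
    and "srg V E n k l m"
    and "\<not> boring V E"
  shows "srg (clique_graph_vertices V E w) (clique_graph_adj V E w) n k l m
         \<longleftrightarrow> k = w * (w - 1)"
proof -
  interpret cr V E w using assms(1-3) by unfold_locales
  have cV: "card V = n" and degV: "\<forall>x\<in>V. card {y\<in>V. E x y} = k"
    and lamV: "\<forall>x\<in>V. \<forall>y\<in>V. E x y \<longrightarrow> common_nbrs V E x y = l"
    and muV: "\<forall>x\<in>V. \<forall>y\<in>V. x \<noteq> y \<and> \<not> E x y \<longrightarrow> common_nbrs V E x y = m"
    using assms(4) by (simp_all add: srg_def)
  have rk: "card {S\<in>L. x \<in> S} * (w - 1) = k" if "x \<in> V" for x
    using r_count[OF that] degV that by simp
  obtain x0 y0 where "E x0 y0" using creg by (auto simp: clique_regular_def)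
  then have x0: "x0 \<in> V" using Ein by auto
  then have npos: "n > 0" using cV finV card_gt_0_iff by blast
  have dc: "card L * w * (w - 1) = n * k"
  proof -
    have "card L * w * (w - 1) = (\<Sum>x\<in>V. card {S\<in>L. x \<in> S} * (w - 1))"
      by (simp add: double_count sum_distrib_right)
    also have "\<dots> = (\<Sum>x\<in>V. k)" by (intro sum.cong refl) (metis rk)
    finally show ?thesis using cV by simp
  qed
  show ?thesis
  proof
    assume "srg (clique_graph_vertices V E w) (clique_graph_adj V E w) n k l m"
    then have cL: "card L = n" by (simp add: srg_def clique_graph_vertices_def)
    then have "n * (w * (w - 1)) = n * k" using dc by (simp add: mult_ac)
    then show "k = w * (w - 1)" using npos by simp
  next
    assume kw: "k = w * (w - 1)"
    have wpos: "w - 1 > 0" using w2 by simp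
    have r: "card {S\<in>L. x \<in> S} = w" if "x \<in> V" for x
      using rk[OF that] kw wpos by simp
    have cL: "card L = n"
    proof -
      have "card L * w = (\<Sum>x\<in>V. w)" using double_count r by simp
      then have "card L * w = n * w" using cV by simp
      then show ?thesis using w2 by simp
    qed
    define N :: "'v \<Rightarrow> 'v set \<Rightarrow> real" where "N x S = (if x \<in> S then 1 else 0)" for x S
    define e :: "'v \<Rightarrow> 'v \<Rightarrow> real" where "e x y = (if E x y then 1 else 0)" for x y
    define a :: "'v set \<Rightarrow> 'v set \<Rightarrow> real" where "a S T = (if clique_graph_adj V E w S T then 1 else 0)" for S T
    have hN: "(\<Sum>S\<in>L. N x S * N y S) = e x y + real w * (if x = y then 1 else 0)" if xy: "x \<in> V" "y \<in> V" for x y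
    proof -
      have "(\<Sum>S\<in>L. N x S * N y S) = (\<Sum>S\<in>L. if x \<in> S \<and> y \<in> S then 1 else 0)"
        by (intro sum.cong refl) (simp add: N_def)
      also have "\<dots> = real (card {S\<in>L. x \<in> S \<and> y \<in> S})" using card_sum_real[OF finL] by simp
      finally have 1: "(\<Sum>S\<in>L. N x S * N y S) = real (card {S\<in>L. x \<in> S \<and> y \<in> S})" .
      show ?thesis
      proof (cases "x = y")
        case True then show ?thesis using 1 r[OF xy(1)] by (simp add: e_def Eirr)
      next
        case False then show ?thesis using 1 pair_count[OF xy False] by (simp add: e_def)
      qed
    qed
    have hB: "(\<Sum>x\<in>V. N x S * N x T) = a S T + real w * (if S = T then 1 else 0)" if ST: "S \<in> L" "T \<in> L" for S T
    proof -
      have "(\<Sum>x\<in>V. N x S * N x T) = (\<Sum>x\<in>V. if x \<in> S \<and> x \<in> T then 1 else 0)"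
        by (intro sum.cong refl) (simp add: N_def)
      also have "\<dots> = real (card {x\<in>V. x \<in> S \<and> x \<in> T})" using card_sum_real[OF finV] by simp
      also have "{x\<in>V. x \<in> S \<and> x \<in> T} = S \<inter> T" using ST Lmem by auto
      finally show ?thesis using inter_card[OF ST] by (simp add: a_def)
    qed
    have hE: "(\<Sum>z\<in>V. e x z * e z y) = (real l - real m) * e x y + (real k - real m) * (if x = y then 1 else 0) + real m"
      if xy: "x \<in> V" "y \<in> V" for x y
    proof -
      have "(\<Sum>z\<in>V. e x z * e z y) = (\<Sum>z\<in>V. if E x z \<and> E y z then 1 else 0)"
        by (intro sum.cong refl) (auto simp: e_def dest: Esym)
      also have "\<dots> = real (common_nbrs V E x y)"
        using card_sum_real[OF finV] by (simp add: common_nbrs_def)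
      finally have 1: "(\<Sum>z\<in>V. e x z * e z y) = real (common_nbrs V E x y)" .
      show ?thesis
      proof (cases "x = y")
        case True
        then have "common_nbrs V E x y = k" using degV xy by (simp add: common_nbrs_def)
        then show ?thesis using 1 True by (simp add: e_def Eirr)
      next
        case False
        show ?thesis
        proof (cases "E x y")
          case True then show ?thesis using 1 False lamV xy by (simp add: e_def)
        next
          case F2: False then show ?thesis using 1 False muV xy by (simp add: e_def)
        qed
      qed
    qed
    have hEr: "(\<Sum>y\<in>V. e x y) = real k" if "x \<in> V" for x
      using card_sum_real[OF finV, of "E x"] degV that by (simp add: e_def)
    have hesym: "e x y = e y x" for x y by (auto simp: e_def dest: Esym)
    have hcol: "(\<Sum>x\<in>V. N x S) = real w" if S: "S \<in> L" for S
    proof -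
      have "(\<Sum>x\<in>V. N x S) = real (card {x\<in>V. x \<in> S})"
        using card_sum_real[OF finV] by (simp add: N_def)
      also have "{x\<in>V. x \<in> S} = S" using S Lmem by auto
      finally show ?thesis using S Lmem by simp
    qed
    have hk: "real k + real w = real w * real w"
    proof -
      have "k + w = w * w" using kw w2 by (cases w) auto
      then show ?thesis by (metis of_nat_add of_nat_mult)
    qed
    have hA: "(\<Sum>T\<in>L. a S T) = real k" if S: "S \<in> L" for S
    proof -
      have "(\<Sum>T\<in>L. \<Sum>x\<in>V. N x S * N x T) = (\<Sum>x\<in>V. N x S * (\<Sum>T\<in>L. N x T))"
        by (subst sum.swap) (simp add: sum_distrib_left)
      also have "\<dots> = (\<Sum>x\<in>V. N x S * real w)"
      proof (intro sum.cong refl)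
        fix x assume x: "x \<in> V"
        have "(\<Sum>T\<in>L. N x T) = real (card {T\<in>L. x \<in> T})"
          using card_sum_real[OF finL] by (simp add: N_def)
        then show "N x S * (\<Sum>T\<in>L. N x T) = N x S * real w" using r[OF x] by simp
      qed
      also have "\<dots> = real w * real w" using hcol[OF S] by (simp add: sum_distrib_right[symmetric])
      finally have 1: "(\<Sum>T\<in>L. \<Sum>x\<in>V. N x S * N x T) = real w * real w" .
      have "(\<Sum>T\<in>L. \<Sum>x\<in>V. N x S * N x T) = (\<Sum>T\<in>L. a S T + real w * (if S = T then 1 else 0))"
        by (intro sum.cong refl) (simp add: hB S)
      also have "\<dots> = (\<Sum>T\<in>L. a S T) + real w"
        using finL S by (simp add: sum.distrib if_distrib[of "\<lambda>t. real w * t"] cong: if_cong)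
      finally show ?thesis using 1 hk by simp
    qed
    have id: "\<forall>S\<in>L. \<forall>T\<in>L. (\<Sum>U\<in>L. a S U * a U T) = (real l - real m) * a S T + (real k - real m) * (if S = T then 1 else 0) + real m"
      apply (rule alg[where V=V and N=N and e=e and w="real w" and k="real k"])
      using finV finL hN hB hE hEr hesym hA hcol hk cL cV
      by (auto simp: a_def adj_sym clique_graph_adj_def)
    have cn: "real (common_nbrs L (clique_graph_adj V E w) S T) = (\<Sum>U\<in>L. a S U * a U T)" for S T
    proof -
      have "(\<Sum>U\<in>L. a S U * a U T) = (\<Sum>U\<in>L. if clique_graph_adj V E w S U \<and> clique_graph_adj V E w T U then 1 else 0)"
        by (intro sum.cong refl) (auto simp: a_def adj_sym[of V E w _ T])
      then show ?thesis using card_sum_real[OF finL] by (simp add: common_nbrs_def)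
    qed
    show "srg (clique_graph_vertices V E w) (clique_graph_adj V E w) n k l m"
      unfolding srg_def clique_graph_vertices_def
    proof (intro conjI ballI impI)
      show "simple_graph L (clique_graph_adj V E w)"
        using finL by (auto simp: simple_graph_def clique_graph_adj_def)
      show "card L = n" by (rule cL)
    next
      fix S assume S: "S \<in> L"
      have "real (card {T\<in>L. clique_graph_adj V E w S T}) = real k"
        using card_sum_real[OF finL] hA[OF S] by (simp add: a_def)
      then show "card {T\<in>L. clique_graph_adj V E w S T} = k" by simp
    next
      fix S T assume "S \<in> L" "T \<in> L" "clique_graph_adj V E w S T"
      then have "real (common_nbrs L (clique_graph_adj V E w) S T) = real l"
        using id cn by (auto simp: a_def clique_graph_adj_def)
      then show "common_nbrs L (clique_graph_adj V E w) S T = l" by simp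
    next
      fix S T assume "S \<in> L" "T \<in> L" "S \<noteq> T \<and> \<not> clique_graph_adj V E w S T"
      then have "real (common_nbrs L (clique_graph_adj V E w) S T) = real m"
        using id cn by (auto simp: a_def)
      then show "common_nbrs L (clique_graph_adj V E w) S T = m" by simp
    qed
  qed
qed

end
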